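(* Let $N\ge2$, $x_1>x_2>\cdots>x_N$ be real, $\rho=\sum_{j=1}^N\rho_j\delta_{x_j}$ with $\rho_j>0$, $\sum\rho_j=1$, and $\rho_t=e^{2tx}d\rho(x)/\int e^{2tx}d\rho(x)$. Let $a_n(t)>0$ ($1\le n\le N-1$) and $b_n(t)$ ($1\le n\le N$) be the Jacobi parameters of $\rho_t$, defined by $xP_n(x)=P_{n+1}(x)+b_{n+1}P_n(x)+a_n^2P_{n-1}(x)$ for the monic orthogonal polynomials $P_n=P_n(\cdot;\rho_t)$ ($P_{-1}=0$, $P_0=1$). Then there are constants $C_3,C_4$ such that for all $t\ge0$, \[ |b_j(t)-x_j|\le C_3\bigl[e^{2t(x_{j+1}-x_j)}+e^{2t(x_j-x_{j-1})}\bigr]\quad(1\le j\le N), \] \[ |a_j(t)|\le C_4\bigl[e^{t(x_{j+2}-x_{j+1})}+e^{t(x_{j+1}-x_j)}+e^{t(x_j-x_{j-1})}\bigr]\quad(1\le j\le N-1), \] where any term involving $x_0$ or $x_{N+1}$ is omitted. *)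

theory Defs
  imports Complex_Main "HOL-Computational_Algebra.Polynomial"
begin

text \<open>Discrete measure rho = sum_{j=1..N} r j delta_{x j}; the tilted measure
rho_t has weights r j e^{2 t x j} / sum_k r k e^{2 t x k}.\<close>
definition tilt_w :: "nat \<Rightarrow> (nat \<Rightarrow> real) \<Rightarrow> (nat \<Rightarrow> real) \<Rightarrow> real \<Rightarrow> nat \<Rightarrow> real" where
  "tilt_w N x r t j = r j * exp (2 * t * x j) / (\<Sum>k=1..N. r k * exp (2 * t * x k))"

definition ip :: "nat \<Rightarrow> (nat \<Rightarrow> real) \<Rightarrow> (nat \<Rightarrow> real) \<Rightarrow> real poly \<Rightarrow> real poly \<Rightarrow> real" where
  "ip N x w p q = (\<Sum>j=1..N. w j * poly p (x j) * poly q (x j))"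

text \<open>n-th monic orthogonal polynomial P_n (meaningful for n \<le> N).\<close>
definition mop :: "nat \<Rightarrow> (nat \<Rightarrow> real) \<Rightarrow> (nat \<Rightarrow> real) \<Rightarrow> nat \<Rightarrow> real poly" where
  "mop N x w n = (THE p. degree p = n \<and> lead_coeff p = 1 \<and>
                        (\<forall>q. degree q < n \<longrightarrow> ip N x w p q = 0))"

definition mop_prev :: "nat \<Rightarrow> (nat \<Rightarrow> real) \<Rightarrow> (nat \<Rightarrow> real) \<Rightarrow> nat \<Rightarrow> real poly" where
  "mop_prev N x w n = (if n = 0 then 0 else mop N x w (n - 1))"

definition jacobi_b :: "nat \<Rightarrow> (nat \<Rightarrow> real) \<Rightarrow> (nat \<Rightarrow> real) \<Rightarrow> nat \<Rightarrow> real" where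
  "jacobi_b N x w m = (THE b. \<exists>c. [:0, 1:] * mop N x w (m - 1) =
       mop N x w m + smult b (mop N x w (m - 1)) + smult c (mop_prev N x w (m - 1)))"

definition jacobi_a :: "nat \<Rightarrow> (nat \<Rightarrow> real) \<Rightarrow> (nat \<Rightarrow> real) \<Rightarrow> nat \<Rightarrow> real" where
  "jacobi_a N x w n = (THE a. a > 0 \<and> (\<exists>b. [:0, 1:] * mop N x w n =
       mop N x w (n + 1) + smult b (mop N x w n) + smult (a\<^sup>2) (mop_prev N x w n)))"

end

theory Submission imports Defs begin

lemma ip_add1[simp]: "ip N x w (p + q) r = ip N x w p r + ip N x w q r"
  by (simp add: ip_def sum.distrib algebra_simps)
lemma ip_add2[simp]: "ip N x w r (p + q) = ip N x w r p + ip N x w r q"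
  by (simp add: ip_def sum.distrib algebra_simps)
lemma ip_diff1: "ip N x w (p - q) r = ip N x w p r - ip N x w q r"
  by (simp add: ip_def sum_subtractf algebra_simps)
lemma ip_diff2: "ip N x w r (p - q) = ip N x w r p - ip N x w r q"
  by (simp add: ip_def sum_subtractf algebra_simps)
lemma ip_smult1[simp]: "ip N x w (smult c p) r = c * ip N x w p r"
  by (simp add: ip_def sum_distrib_left algebra_simps)
lemma ip_smult2[simp]: "ip N x w r (smult c p) = c * ip N x w r p"
  by (simp add: ip_def sum_distrib_left algebra_simps)
lemma ip_zero1[simp]: "ip N x w 0 r = 0" by (simp add: ip_def)
lemma ip_zero2[simp]: "ip N x w r 0 = 0" by (simp add: ip_def)
lemma ip_sym: "ip N x w p q = ip N x w q p"
  by (simp add: ip_def algebra_simps)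
lemma ip_sum1: "finite A \<Longrightarrow> ip N x w (\<Sum>k\<in>A. f k) q = (\<Sum>k\<in>A. ip N x w (f k) q)"
  by (induction A rule: finite_induct) auto
lemma ip_X: "ip N x w ([:0,1:] * p) q = ip N x w p ([:0,1:] * q)"
  by (simp add: ip_def algebra_simps)

lemma roots_zero:
  fixes d :: "real poly"
  assumes "finite S" "inj_on x S" "\<forall>m\<in>S. poly d (x m) = 0" "d = 0 \<or> degree d < card S"
  shows "d = 0"
proof (rule ccontr)
  assume d: "d \<noteq> 0"
  have "x ` S \<subseteq> {z. poly d z = 0}" using assms(3) by auto
  hence "card (x ` S) \<le> card {z. poly d z = 0}"
    by (intro card_mono poly_roots_finite d)
  also have "\<dots> \<le> degree d" by (rule card_poly_roots_bound[OF d])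
  finally show False using assms(4) d card_image[OF assms(2)] by simp
qed

lemma diff_small:
  fixes p q :: "real poly"
  assumes "degree p \<le> n" "degree q \<le> n" "coeff p n = coeff q n"
  shows "p - q = 0 \<or> degree (p - q) < n"
proof (cases "p - q = 0")
  case False
  hence ne: "p - q \<noteq> 0" by simp
  have le: "degree (p - q) \<le> n" using assms by (intro degree_diff_le) auto
  have "coeff (p - q) n = 0" using assms by simp
  hence "degree (p - q) \<noteq> n" using ne leading_coeff_neq_0[OF ne] by auto
  with le show ?thesis by simp
qed simp

lemma X_mult: "[:0,1:] * (p::real poly) = pCons 0 p" by simp

definition OP :: "nat \<Rightarrow> (nat \<Rightarrow> real) \<Rightarrow> (nat \<Rightarrow> real) \<Rightarrow> nat \<Rightarrow> real poly \<Rightarrow> bool" where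
  "OP N x w n p \<longleftrightarrow> degree p = n \<and> lead_coeff p = 1 \<and> (\<forall>q. degree q < n \<longrightarrow> ip N x w p q = 0)"

definition Lg :: "(nat \<Rightarrow> real) \<Rightarrow> nat set \<Rightarrow> nat \<Rightarrow> real poly" where
  "Lg x S k = (\<Prod>i\<in>S - {k}. [:- x i, 1:])"
definition Qp :: "(nat \<Rightarrow> real) \<Rightarrow> nat \<Rightarrow> real poly" where
  "Qp x n = (\<Prod>i\<in>{1..n}. [:- x i, 1:])"

lemma linprod_deg: "finite A \<Longrightarrow> degree (\<Prod>i\<in>A. [:- (x i::real), 1:]) = card A"
  by (subst degree_prod_eq_sum_degree) auto
lemma linprod_lc: "lead_coeff (\<Prod>i\<in>A. [:- (x i::real), 1:]) = 1"
  by (simp add: lead_coeff_prod)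
lemma linprod_poly: "poly (\<Prod>i\<in>A. [:- x i, 1:]) y = (\<Prod>i\<in>A. y - (x i::real))"
  by (simp add: poly_prod)

lemma Qp_deg: "degree (Qp x n) = n" unfolding Qp_def by (simp add: linprod_deg)
lemma Qp_lc: "lead_coeff (Qp x n) = 1" unfolding Qp_def by (rule linprod_lc)
lemma Qp_root: "1 \<le> l \<Longrightarrow> l \<le> n \<Longrightarrow> poly (Qp x n) (x l) = 0"
  unfolding Qp_def linprod_poly by (rule prod_zero) auto

lemma Lg_root: "finite S \<Longrightarrow> m \<in> S \<Longrightarrow> m \<noteq> k \<Longrightarrow> poly (Lg x S k) (x m) = 0"
  unfolding Lg_def linprod_poly by (rule prod_zero) auto
lemma Lg_deg: "finite S \<Longrightarrow> k \<in> S \<Longrightarrow> degree (Lg x S k) = card S - 1"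
  unfolding Lg_def by (simp add: linprod_deg)
lemma Lg_lc: "lead_coeff (Lg x S k) = 1" unfolding Lg_def by (rule linprod_lc)

definition gam :: "(nat \<Rightarrow> real) \<Rightarrow> nat \<Rightarrow> real" where
  "gam x n = Min ((\<lambda>k. (poly (Lg x {1..Suc n} k) (x k))\<^sup>2) ` {1..Suc n}) / (real (Suc n))\<^sup>2"

definition HK :: "nat \<Rightarrow> real \<Rightarrow> (nat \<Rightarrow> real) \<Rightarrow> bool" where
  "HK N K w \<longleftrightarrow> (\<forall>a b. 1 \<le> a \<longrightarrow> a \<le> b \<longrightarrow> b \<le> N \<longrightarrow> w b \<le> K * w a)"

definition BQ :: "nat \<Rightarrow> (nat \<Rightarrow> real) \<Rightarrow> nat \<Rightarrow> real" where
  "BQ N x n = (\<Sum>l=1..N. (poly (Qp x n) (x l))\<^sup>2)"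
definition BP :: "nat \<Rightarrow> (nat \<Rightarrow> real) \<Rightarrow> real \<Rightarrow> nat \<Rightarrow> real" where
  "BP N x K n = (\<Sum>l=1..N. \<bar>poly (Qp x n) (x l)\<bar> + (\<Sum>k\<in>{1..n}. (1 + K\<^sup>2 * BQ N x n) *
      \<bar>poly (Lg x {1..n} k) (x l) / poly (Lg x {1..n} k) (x k)\<bar>))"

lemma BQ_nonneg: "BQ N x n \<ge> 0" unfolding BQ_def by (intro sum_nonneg) auto

lemma abs_le_sq: "\<bar>y::real\<bar> \<le> 1 + y\<^sup>2"
proof -
  have "0 \<le> (\<bar>y\<bar> - 1)\<^sup>2" by simp
  hence "2 * \<bar>y\<bar> \<le> 1 + y\<^sup>2" by (simp add: power2_eq_square algebra_simps abs_mult_self_eq)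
  thus ?thesis by simp
qed

definition CS :: "nat \<Rightarrow> (nat \<Rightarrow> real) \<Rightarrow> real \<Rightarrow> nat \<Rightarrow> nat \<Rightarrow> real" where
  "CS N x K n k = K * BP N x K n * (\<Sum>l=1..N. \<bar>poly (Lg x {1..n} k) (x l)\<bar>) / \<bar>poly (Lg x {1..n} k) (x k)\<bar>"
definition CB :: "nat \<Rightarrow> (nat \<Rightarrow> real) \<Rightarrow> real \<Rightarrow> nat \<Rightarrow> real" where
  "CB N x K n = real N * K * (\<Sum>l=1..N. \<bar>x l - x (Suc n)\<bar>) *
     ((BP N x K n)\<^sup>2 + (\<Sum>k\<in>{1..n}. (CS N x K n k)\<^sup>2)) / gam x n"

locale opw =
  fixes N :: nat and x w :: "nat \<Rightarrow> real"
  assumes dec: "\<And>i j. 1 \<le> i \<Longrightarrow> i < j \<Longrightarrow> j \<le> N \<Longrightarrow> x i > x j"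
    and pos: "\<And>j. 1 \<le> j \<Longrightarrow> j \<le> N \<Longrightarrow> w j > 0"
begin

lemma inj_x: "inj_on x S" if "S \<subseteq> {1..N}" for S
proof (rule inj_onI)
  fix a b assume "a \<in> S" "b \<in> S" "x a = x b"
  with that show "a = b"
    using dec[of a b] dec[of b a] by (cases a b rule: linorder_cases) force+
qed

lemma ip_nonneg: "ip N x w p p \<ge> 0"
  unfolding ip_def using pos by (intro sum_nonneg) (auto simp: mult.assoc less_imp_le)

lemma ip_zero_roots: assumes "ip N x w p p = 0" "j \<in> {1..N}" shows "poly p (x j) = 0"
proof -
  have "\<forall>i\<in>{1..N}. w i * poly p (x i) * poly p (x i) = 0"
    using assms(1) unfolding ip_def
    by (subst sum_nonneg_eq_0_iff[symmetric]) (use pos in \<open>auto simp: mult.assoc less_imp_le\<close>)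
  with assms(2) pos[of j] show ?thesis by force
qed

lemma ip_pos: assumes "p \<noteq> 0" "degree p < N" shows "ip N x w p p > 0"
proof -
  have "ip N x w p p \<noteq> 0"
  proof
    assume "ip N x w p p = 0"
    hence "p = 0" using ip_zero_roots
      by (intro roots_zero[of "{1..N}" x]) (auto intro: inj_x simp: assms)
    with assms show False by simp
  qed
  with ip_nonneg[of p] show ?thesis by linarith
qed


lemma span_orth:
  assumes f: "\<forall>l<n. OP N x w l (f l)" and o: "\<forall>l<n. ip N x w p (f l) = 0"
  shows "degree q < n \<Longrightarrow> ip N x w p q = 0"
proof (induction "degree q" arbitrary: q rule: less_induct)
  case less
  define d where "d = degree q"
  define q' where "q' = q - smult (lead_coeff q) (f d)"
  have fd: "degree (f d) = d" "lead_coeff (f d) = 1" using f less(2) unfolding OP_def d_def by auto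
  have "q' = 0 \<or> degree q' < d" unfolding q'_def
    by (rule diff_small) (use fd in \<open>auto simp: d_def intro: order.trans[OF degree_smult_le]\<close>)
  moreover have "ip N x w p q = ip N x w p q' + lead_coeff q * ip N x w p (f d)"
    unfolding q'_def by (simp add: ip_diff2)
  moreover have "ip N x w p (f d) = 0" using o less(2) d_def by auto
  ultimately show ?case using less(1)[of q'] less(2) d_def by auto
qed

lemma OP_exists: "n \<le> N \<Longrightarrow> \<exists>p. OP N x w n p"
proof (induction n rule: less_induct)
  case (less n)
  have "\<forall>k. \<exists>p. k < n \<longrightarrow> OP N x w k p" using less by auto
  then obtain f where f: "\<forall>k<n. OP N x w k (f k)" by metis
  have deg: "degree (f k) = k" and lc: "lead_coeff (f k) = 1" if "k < n" for k
    using f that unfolding OP_def by auto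
  have orth: "ip N x w (f k) (f l) = 0" if "k < n" "l < n" "k \<noteq> l" for k l
  proof (cases "l < k")
    case True thus ?thesis using f that deg unfolding OP_def by auto
  next
    case False
    hence "k < l" using that by simp
    thus ?thesis using f that deg ip_sym[of N x w "f k"] unfolding OP_def by auto
  qed
  have npos: "ip N x w (f k) (f k) > 0" if "k < n" for k
    using deg[OF that] lc[OF that] less(2) that by (intro ip_pos) auto
  define c where "c k = ip N x w (monom 1 n) (f k) / ip N x w (f k) (f k)" for k
  define p where "p = monom 1 n - (\<Sum>k<n. smult (c k) (f k))"
  have o: "ip N x w p (f l) = 0" if "l < n" for l
  proof -
    have "(\<Sum>k<n. c k * ip N x w (f k) (f l)) = (\<Sum>k<n. if k = l then c l * ip N x w (f l) (f l) else 0)"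
      by (intro sum.cong) (use orth that in auto)
    also have "\<dots> = c l * ip N x w (f l) (f l)" using that by simp
    also have "\<dots> = ip N x w (monom 1 n) (f l)" using npos[OF that] by (simp add: c_def)
    finally show ?thesis unfolding p_def by (simp add: ip_sum1 ip_diff1)
  qed
  have sdeg: "degree (\<Sum>k<n. smult (c k) (f k)) \<le> n"
    by (intro degree_sum_le) (auto intro: order.trans[OF degree_smult_le] simp: deg)
  have scoeff: "coeff (\<Sum>k<n. smult (c k) (f k)) n = 0"
    by (simp add: coeff_sum coeff_eq_0 deg)
  have pd: "degree p \<le> n" unfolding p_def using sdeg by (intro degree_diff_le) (auto simp: degree_monom_le)
  have pc: "coeff p n = 1" unfolding p_def using scoeff by (simp add: coeff_monom)
  have "degree p = n" using pd pc le_degree[of p n] by force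
  moreover have "\<forall>q. degree q < n \<longrightarrow> ip N x w p q = 0"
    using span_orth[of n f p] f o by auto
  ultimately show ?case using pc unfolding OP_def by auto
qed

lemma OP_unique: assumes "n \<le> N" "OP N x w n p" "OP N x w n p'" shows "p = p'"
proof -
  have "p - p' = 0 \<or> degree (p - p') < n"
    using assms by (intro diff_small) (auto simp: OP_def)
  moreover
  { assume d: "degree (p - p') < n"
    hence "ip N x w p (p - p') = 0" "ip N x w p' (p - p') = 0" using assms(2,3) by (auto simp: OP_def)
    hence "ip N x w (p - p') (p - p') = 0" by (simp add: ip_diff1)
    hence "p - p' = 0" using ip_pos[of "p - p'"] d assms(1) by fastforce }
  ultimately show ?thesis by auto
qed

lemma mop_OP: "n \<le> N \<Longrightarrow> OP N x w n (mop N x w n)"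
proof -
  assume n: "n \<le> N"
  then obtain p where p: "OP N x w n p" using OP_exists by blast
  have "\<exists>!p. OP N x w n p" using p OP_unique[OF n] by blast
  hence "OP N x w n (THE p. OP N x w n p)" by (rule theI')
  moreover have "mop N x w n = (THE p. OP N x w n p)" by (simp add: mop_def OP_def)
  ultimately show ?thesis by simp
qed

abbreviation P where "P n \<equiv> mop N x w n"
abbreviation nrm where "nrm n \<equiv> ip N x w (P n) (P n)"

lemma P_deg: "n \<le> N \<Longrightarrow> degree (P n) = n" using mop_OP OP_def by blast
lemma P_lc: "n \<le> N \<Longrightarrow> lead_coeff (P n) = 1" using mop_OP OP_def by blast
lemma P_orth: "n \<le> N \<Longrightarrow> degree q < n \<Longrightarrow> ip N x w (P n) q = 0" using mop_OP OP_def by blast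
lemma P_ne0: "n \<le> N \<Longrightarrow> P n \<noteq> 0" using P_lc by fastforce
lemma nrm_pos: "n < N \<Longrightarrow> nrm n > 0" using ip_pos P_ne0 P_deg by simp
lemma P_orth2: "m \<le> N \<Longrightarrow> n < m \<Longrightarrow> ip N x w (P m) (P n) = 0" using P_orth P_deg by simp

lemma P_min: assumes "n \<le> N" "degree q = n" "lead_coeff q = 1"
  shows "nrm n \<le> ip N x w q q"
proof -
  have "q - P n = 0 \<or> degree (q - P n) < n"
    using assms P_deg P_lc by (intro diff_small) auto
  hence o: "ip N x w (P n) (q - P n) = 0" using P_orth[OF assms(1)] by auto
  have "q = P n + (q - P n)" by simp
  hence "ip N x w q q = nrm n + 2 * ip N x w (P n) (q - P n) + ip N x w (q - P n) (q - P n)"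
    by (metis (no_types, lifting) ip_add1 ip_add2 ip_sym mult_2 add.assoc)
  thus ?thesis using o ip_nonneg[of "q - P n"] by simp
qed

lemma XP_deg: "n \<le> N \<Longrightarrow> degree ([:0,1:] * P n) = Suc n \<and> coeff ([:0,1:] * P n) (Suc n) = 1"
  using P_deg P_lc P_ne0 by (simp add: X_mult)

lemma XP_P: assumes "1 \<le> n" "n \<le> N" shows "ip N x w ([:0,1:] * P n) (P (n - 1)) = nrm n"
proof -
  have "[:0,1:] * P (n - 1) - P n = 0 \<or> degree ([:0,1:] * P (n - 1) - P n) < n"
    using XP_deg[of "n - 1"] P_deg[of n] P_lc[of n] assms by (intro diff_small) auto
  hence "ip N x w (P n) ([:0,1:] * P (n - 1) - P n) = 0" using P_orth assms by auto
  hence "ip N x w (P n) ([:0,1:] * P (n - 1)) = nrm n" by (simp add: ip_diff2)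
  thus ?thesis using ip_X ip_sym by metis
qed


lemma ipX_small: assumes "k \<le> N" "degree q < k - 1" shows "ip N x w ([:0,1:] * P k) q = 0"
proof -
  have "ip N x w ([:0,1:] * P k) q = ip N x w (P k) ([:0,1:] * q)" by (rule ip_X)
  also have "\<dots> = 0"
  proof (cases "q = 0")
    case False
    hence "degree ([:0,1:] * q) < k" using assms by (simp add: X_mult)
    thus ?thesis using P_orth assms by blast
  qed simp
  finally show ?thesis .
qed

lemma rec_exists:
  assumes k: "k < N"
  defines "b \<equiv> ip N x w ([:0,1:] * P k) (P k) / nrm k"
  shows "\<exists>c. [:0,1:] * P k = P (Suc k) + smult b (P k) + smult c (mop_prev N x w k)"
proof -
  define r where "r = [:0,1:] * P k - P (Suc k) - smult b (P k)"
  have "[:0,1:] * P k - P (Suc k) = 0 \<or> degree ([:0,1:] * P k - P (Suc k)) < Suc k"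
    using XP_deg[of k] P_deg[of "Suc k"] P_lc[of "Suc k"] k by (intro diff_small) auto
  hence "degree ([:0,1:] * P k - P (Suc k)) \<le> k" by auto
  hence rdeg: "degree r \<le> k" unfolding r_def using P_deg[of k] k
    by (rule_tac degree_diff_le) (auto intro: order.trans[OF degree_smult_le])
  have np: "nrm k > 0" using nrm_pos k by simp
  have rP: "ip N x w r (P k) = 0"
    unfolding r_def using P_orth2[of "Suc k" k] k np by (simp add: ip_diff1 b_def)
  define s where "s = r - smult (coeff r k) (P k)"
  have sd: "s = 0 \<or> degree s < k" unfolding s_def
    using rdeg P_deg[of k] P_lc[of k] k by (intro diff_small) (auto intro: order.trans[OF degree_smult_le])
  have "ip N x w (P k) s = 0" using sd P_orth[of k s] k by auto
  hence "ip N x w s (P k) = 0" using ip_sym by metis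
  hence "coeff r k * nrm k = 0" unfolding s_def using rP by (simp add: ip_diff1)
  hence "coeff r k = 0" using np by simp
  hence rs: "r = s" unfolding s_def by simp
  show ?thesis
  proof (cases k)
    case 0
    then have "r = 0" using sd rs by simp
    thus ?thesis unfolding r_def by (intro exI[of _ 0]) (simp add: algebra_simps)
  next
    case (Suc k')
    define u where "u = s - smult (coeff s k') (P k')"
    have "degree s \<le> k'" using sd Suc by auto
    hence ud: "u = 0 \<or> degree u < k'" unfolding u_def
      using P_deg[of k'] P_lc[of k'] k Suc by (intro diff_small) (auto intro: order.trans[OF degree_smult_le])
    have "u = 0"
    proof (rule ccontr)
      assume un: "u \<noteq> 0"
      hence du: "degree u < k'" using ud by simp
      have "ip N x w r u = 0"
        unfolding r_def using ipX_small[of k u] P_orth[of "Suc k" u] P_orth[of k u] du k Suc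
        by (simp add: ip_diff1)
      moreover have "ip N x w (P k') u = 0" using P_orth[of k' u] du k Suc by simp
      ultimately have "ip N x w u u = 0" unfolding u_def using rs by (simp add: ip_diff1)
      moreover have "ip N x w u u > 0" using ip_pos[OF un] du k Suc by simp
      ultimately show False by simp
    qed
    hence "r = smult (coeff s k') (P k')" using rs unfolding u_def by simp
    hence "[:0,1:] * P k = P (Suc k) + smult b (P k) + smult (coeff s k') (mop_prev N x w k)"
      unfolding r_def mop_prev_def using Suc by (simp add: algebra_simps)
    thus ?thesis by blast
  qed
qed

lemma jb_val: assumes k: "k < N"
  shows "jacobi_b N x w (Suc k) = ip N x w ([:0,1:] * P k) (P k) / nrm k"
proof -
  define b where "b = ip N x w ([:0,1:] * P k) (P k) / nrm k"
  have np: "nrm k > 0" using nrm_pos k by simp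
  have prev0: "ip N x w (mop_prev N x w k) (P k) = 0"
  proof (cases k)
    case (Suc k')
    thus ?thesis using P_orth2[of k k'] k ip_sym[of N x w "P k'"] by (simp add: mop_prev_def)
  qed (simp add: mop_prev_def)
  have "b' = b" if "[:0,1:] * P k = P (Suc k) + smult b' (P k) + smult c (mop_prev N x w k)" for b' c
  proof -
    have "ip N x w ([:0,1:] * P k) (P k) = ip N x w (P (Suc k) + smult b' (P k) + smult c (mop_prev N x w k)) (P k)"
      using that by simp
    also have "\<dots> = b' * nrm k" using prev0 P_orth2[of "Suc k" k] k by simp
    finally show ?thesis unfolding b_def using np by simp
  qed
  hence "(THE b'. \<exists>c. [:0,1:] * P k = P (Suc k) + smult b' (P k) + smult c (mop_prev N x w k)) = b"
    using rec_exists[OF k] unfolding b_def[symmetric] by (intro the_equality) blast+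
  thus ?thesis unfolding jacobi_b_def b_def by simp
qed

lemma ja_val: assumes n: "1 \<le> n" "Suc n \<le> N"
  shows "jacobi_a N x w n = sqrt (nrm n / nrm (n - 1))"
proof -
  define c where "c = nrm n / nrm (n - 1)"
  have np: "nrm (n - 1) > 0" "nrm n > 0" using nrm_pos n by auto
  have cpos: "c > 0" using np unfolding c_def by simp
  have prev: "mop_prev N x w n = P (n - 1)" using n by (simp add: mop_prev_def)
  have cu: "c' = c" if "[:0,1:] * P n = P (Suc n) + smult b' (P n) + smult c' (P (n - 1))" for b' c'
  proof -
    have "nrm n = ip N x w ([:0,1:] * P n) (P (n - 1))" using XP_P n by simp
    also have "\<dots> = ip N x w (P (Suc n) + smult b' (P n) + smult c' (P (n - 1))) (P (n - 1))"
      using that by simp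
    also have "\<dots> = c' * nrm (n - 1)" using P_orth2[of "Suc n" "n - 1"] P_orth2[of n "n - 1"] n by simp
    finally show ?thesis unfolding c_def using np by simp
  qed
  obtain c0 where c0: "[:0,1:] * P n = P (Suc n) + smult (ip N x w ([:0,1:] * P n) (P n) / nrm n) (P n) + smult c0 (P (n - 1))"
    using rec_exists[of n] n prev by auto
  have "c0 = c" using cu[OF c0] .
  have "(THE a. a > 0 \<and> (\<exists>b. [:0, 1:] * P n = P (n + 1) + smult b (P n) + smult (a\<^sup>2) (mop_prev N x w n))) = sqrt c"
  proof (rule the_equality)
    show "sqrt c > 0 \<and> (\<exists>b. [:0, 1:] * P n = P (n + 1) + smult b (P n) + smult ((sqrt c)\<^sup>2) (mop_prev N x w n))"
      using cpos c0 \<open>c0 = c\<close> prev by auto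
  next
    fix a assume "a > 0 \<and> (\<exists>b. [:0, 1:] * P n = P (n + 1) + smult b (P n) + smult (a\<^sup>2) (mop_prev N x w n))"
    then obtain b where a: "a > 0" "[:0, 1:] * P n = P (Suc n) + smult b (P n) + smult (a\<^sup>2) (P (n - 1))"
      using prev by auto
    have "a\<^sup>2 = c" using cu[OF a(2)] .
    thus "a = sqrt c" using a(1) by (simp add: real_sqrt_unique)
  qed
  thus ?thesis unfolding jacobi_a_def c_def by simp
qed


lemma Lg_nz: "S \<subseteq> {1..N} \<Longrightarrow> k \<in> S \<Longrightarrow> poly (Lg x S k) (x k) \<noteq> 0"
  unfolding Lg_def linprod_poly using inj_x[of S]
  by (subst prod_zero_iff) (auto simp: finite_subset inj_on_def dest: finite_subset[OF _ finite_atLeastAtMost])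

lemma lagrange:
  assumes S: "S \<subseteq> {1..N}" and p: "p = 0 \<or> degree p < card S"
  shows "p = (\<Sum>k\<in>S. smult (poly p (x k) / poly (Lg x S k) (x k)) (Lg x S k))"
proof -
  have fin: "finite S" using S finite_subset by blast
  define d where "d = p - (\<Sum>k\<in>S. smult (poly p (x k) / poly (Lg x S k) (x k)) (Lg x S k))"
  have roots: "\<forall>m\<in>S. poly d (x m) = 0"
  proof
    fix m assume m: "m \<in> S"
    have "(\<Sum>k\<in>S. poly p (x k) / poly (Lg x S k) (x k) * poly (Lg x S k) (x m))
        = (\<Sum>k\<in>S. if k = m then poly p (x m) else 0)"
      by (intro sum.cong) (use Lg_root[OF fin m] Lg_nz[OF S m] in auto)
    also have "\<dots> = poly p (x m)" using m fin by simp
    finally show "poly d (x m) = 0" unfolding d_def by (simp add: poly_sum)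
  qed
  have "d = 0 \<or> degree d < card S"
  proof (cases "S = {}")
    case True thus ?thesis using p unfolding d_def by auto
  next
    case False
    hence cs: "card S \<ge> 1" using fin by (simp add: Suc_leI card_gt_0_iff)
    have "degree (\<Sum>k\<in>S. smult (poly p (x k) / poly (Lg x S k) (x k)) (Lg x S k)) \<le> card S - 1"
      by (intro degree_sum_le fin) (auto intro: order.trans[OF degree_smult_le] simp: Lg_deg fin)
    moreover have "degree p \<le> card S - 1" using p cs by auto
    ultimately have "degree d \<le> card S - 1" unfolding d_def by (intro degree_diff_le)
    thus ?thesis using cs by (intro disjI2) linarith
  qed
  hence "d = 0" using roots fin inj_x[OF S] by (intro roots_zero) auto
  thus ?thesis unfolding d_def by simp
qed

lemma ip_expand: "ip N x w p q = (\<Sum>l=1..N. w l * poly p (x l) * poly q (x l))"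
  by (simp add: ip_def)

lemma nrm_upper:
  assumes n: "n \<le> N" and E: "E \<ge> 0" "\<forall>l\<in>{Suc n..N}. w l \<le> E"
  shows "nrm n \<le> E * (\<Sum>l=1..N. (poly (Qp x n) (x l))\<^sup>2)"
proof -
  have "nrm n \<le> ip N x w (Qp x n) (Qp x n)" using P_min[OF n] Qp_deg Qp_lc by blast
  also have "\<dots> = (\<Sum>l=1..N. w l * (poly (Qp x n) (x l))\<^sup>2)"
    unfolding ip_def by (simp add: power2_eq_square mult.assoc)
  also have "\<dots> \<le> (\<Sum>l=1..N. E * (poly (Qp x n) (x l))\<^sup>2)"
  proof (intro sum_mono)
    fix l assume l: "l \<in> {1..N}"
    show "w l * (poly (Qp x n) (x l))\<^sup>2 \<le> E * (poly (Qp x n) (x l))\<^sup>2"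
    proof (cases "l \<le> n")
      case True thus ?thesis using l Qp_root[of l n x] E by simp
    next
      case False thus ?thesis using l E by (intro mult_right_mono) auto
    qed
  qed
  finally show ?thesis by (simp add: sum_distrib_left)
qed


lemma nrm_as_sum: "nrm n = (\<Sum>l=1..N. w l * (poly (P n) (x l))\<^sup>2)"
  unfolding ip_def by (simp add: power2_eq_square mult.assoc)

lemma nrm_ge_term: "l \<in> {1..N} \<Longrightarrow> w l * (poly (P n) (x l))\<^sup>2 \<le> nrm n"
  unfolding nrm_as_sum using pos by (intro member_le_sum) (force intro: mult_nonneg_nonneg less_imp_le)+

lemma gam_pos: "n < N \<Longrightarrow> gam x n > 0"
  unfolding gam_def using Lg_nz[of "{1..Suc n}"]
  by (intro divide_pos_pos) (auto simp: Min_gr_iff)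

lemma nrm_lower:
  assumes n: "n < N" and K: "K > 0" and H: "HK N K w"
  shows "w (Suc n) / K * gam x n \<le> nrm n"
proof -
  define S where "S = {1..Suc n}"
  have S: "S \<subseteq> {1..N}" "finite S" "card S = Suc n" using n by (auto simp: S_def)
  define a where "a k = poly (P n) (x k) / poly (Lg x S k) (x k)" for k
  have lag: "P n = (\<Sum>k\<in>S. smult (a k) (Lg x S k))"
    unfolding a_def using P_deg[of n] n S by (intro lagrange) auto
  have "1 = coeff (P n) n" using P_lc[of n] P_deg[of n] n by simp
  also have "\<dots> = (\<Sum>k\<in>S. a k * coeff (Lg x S k) n)"
    by (subst lag) (simp add: coeff_sum)
  also have "\<dots> = (\<Sum>k\<in>S. a k)"
  proof (intro sum.cong refl)
    fix k assume "k \<in> S"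
    hence "degree (Lg x S k) = n" using Lg_deg[of S k x] S by simp
    thus "a k * coeff (Lg x S k) n = a k" using Lg_lc[of x S k] by simp
  qed
  finally have sum1: "(\<Sum>k\<in>S. a k) = 1" by simp
  have "\<exists>k\<in>S. 1 / real (Suc n) \<le> \<bar>a k\<bar>"
  proof (rule ccontr)
    assume "\<not> ?thesis"
    hence lt: "\<forall>k\<in>S. \<bar>a k\<bar> < 1 / real (Suc n)" by auto
    have "1 = \<bar>\<Sum>k\<in>S. a k\<bar>" using sum1 by simp
    also have "\<dots> \<le> (\<Sum>k\<in>S. \<bar>a k\<bar>)" by (rule sum_abs)
    also have "\<dots> < (\<Sum>k\<in>S. 1 / real (Suc n))"
      using lt S by (intro sum_strict_mono) (auto simp: S_def)
    also have "\<dots> = 1" using S by simp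
    finally show False by simp
  qed
  then obtain k where k: "k \<in> S" "1 / real (Suc n) \<le> \<bar>a k\<bar>" by blast
  have Lnz: "poly (Lg x S k) (x k) \<noteq> 0" using Lg_nz S k by blast
  have pk: "poly (P n) (x k) = a k * poly (Lg x S k) (x k)" using Lnz unfolding a_def by simp
  have "gam x n \<le> (poly (Lg x S k) (x k))\<^sup>2 / (real (Suc n))\<^sup>2"
    unfolding gam_def S_def[symmetric] using k S
    by (intro divide_right_mono Min_le) auto
  also have "\<dots> = (1 / real (Suc n))\<^sup>2 * (poly (Lg x S k) (x k))\<^sup>2" by (simp add: power_divide)
  also have "\<dots> \<le> (a k)\<^sup>2 * (poly (Lg x S k) (x k))\<^sup>2"
    using k(2) by (intro mult_right_mono) (auto simp: abs_le_square_iff[symmetric] power2_abs)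
  also have "\<dots> = (poly (P n) (x k))\<^sup>2" by (simp add: pk power_mult_distrib)
  finally have g: "gam x n \<le> (poly (P n) (x k))\<^sup>2" .
  have kr: "1 \<le> k" "k \<le> Suc n" "k \<le> N" using k S n by (auto simp: S_def)
  have wk: "w (Suc n) \<le> K * w k" using H kr n unfolding HK_def by auto
  have gp: "gam x n \<ge> 0" using gam_pos n by (simp add: less_imp_le)
  have "w (Suc n) / K * gam x n \<le> w k * gam x n"
    using wk K gp by (intro mult_right_mono) (auto simp: field_simps)
  also have "\<dots> \<le> w k * (poly (P n) (x k))\<^sup>2" using g pos[of k] kr by (intro mult_left_mono) auto
  also have "\<dots> \<le> nrm n" using kr by (intro nrm_ge_term) auto
  finally show ?thesis .
qed


lemma P_bound_low:
  assumes n: "n < N" and K: "K > 0" and H: "HK N K w" and k: "1 \<le> k" "k \<le> Suc n"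
  shows "\<bar>poly (P n) (x k)\<bar> \<le> 1 + K\<^sup>2 * BQ N x n"
proof -
  have E: "\<forall>l\<in>{Suc n..N}. w l \<le> K * w (Suc n)" using H unfolding HK_def by auto
  have "nrm n \<le> K * w (Suc n) * BQ N x n"
    unfolding BQ_def using E n pos[of "Suc n"] K by (intro nrm_upper) auto
  also have "\<dots> \<le> K * (K * w k) * BQ N x n"
    using H k n K BQ_nonneg[of N x n] unfolding HK_def by (intro mult_right_mono mult_left_mono) auto
  finally have "w k * (poly (P n) (x k))\<^sup>2 \<le> w k * (K\<^sup>2 * BQ N x n)"
    using nrm_ge_term[of k n] k n by (simp add: power2_eq_square algebra_simps)
  hence "(poly (P n) (x k))\<^sup>2 \<le> K\<^sup>2 * BQ N x n" using pos[of k] k n by simp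
  thus ?thesis using abs_le_sq[of "poly (P n) (x k)"] by simp
qed

lemma P_bound:
  assumes n: "n < N" and K: "K > 0" and H: "HK N K w" and l: "l \<in> {1..N}"
  shows "\<bar>poly (P n) (x l)\<bar> \<le> BP N x K n"
proof -
  define S where "S = {1..n}"
  define d where "d = P n - Qp x n"
  define L where "L = Lg x S"
  have S: "S \<subseteq> {1..N}" "finite S" "card S = n" using n by (auto simp: S_def)
  have "d = 0 \<or> degree d < n" unfolding d_def
    using P_deg[of n] P_lc[of n] Qp_deg[of x n] Qp_lc[of x n] n by (intro diff_small) auto
  hence deq: "d = (\<Sum>k\<in>S. smult (poly d (x k) / poly (L k) (x k)) (L k))"
    unfolding L_def using S by (intro lagrange) auto
  have pk: "poly d (x k) = poly (P n) (x k)" if "k \<in> S" for k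
    using that Qp_root[of k n x] unfolding d_def S_def by simp
  have "poly d (x l) = (\<Sum>k\<in>S. poly d (x k) / poly (L k) (x k) * poly (L k) (x l))"
    by (subst deq) (simp add: poly_sum)
  also have "\<dots> = (\<Sum>k\<in>S. poly (P n) (x k) * (poly (L k) (x l) / poly (L k) (x k)))"
    by (intro sum.cong) (auto simp: pk)
  finally have "poly (P n) (x l) = poly (Qp x n) (x l) + (\<Sum>k\<in>S. poly (P n) (x k) * (poly (L k) (x l) / poly (L k) (x k)))"
    unfolding d_def by simp
  hence "\<bar>poly (P n) (x l)\<bar> \<le> \<bar>poly (Qp x n) (x l)\<bar> + \<bar>\<Sum>k\<in>S. poly (P n) (x k) * (poly (L k) (x l) / poly (L k) (x k))\<bar>"
    by (simp only: abs_triangle_ineq)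
  also have "\<dots> \<le> \<bar>poly (Qp x n) (x l)\<bar> + (\<Sum>k\<in>S. \<bar>poly (P n) (x k) * (poly (L k) (x l) / poly (L k) (x k))\<bar>)"
    by (intro add_left_mono sum_abs)
  also have "\<dots> \<le> \<bar>poly (Qp x n) (x l)\<bar> + (\<Sum>k\<in>S. (1 + K\<^sup>2 * BQ N x n) * \<bar>poly (L k) (x l) / poly (L k) (x k)\<bar>)"
  proof (intro add_left_mono sum_mono)
    fix k assume "k \<in> S"
    hence "\<bar>poly (P n) (x k)\<bar> \<le> 1 + K\<^sup>2 * BQ N x n" using P_bound_low[OF n K H] by (auto simp: S_def)
    thus "\<bar>poly (P n) (x k) * (poly (L k) (x l) / poly (L k) (x k))\<bar> \<le> (1 + K\<^sup>2 * BQ N x n) * \<bar>poly (L k) (x l) / poly (L k) (x k)\<bar>"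
      unfolding abs_mult by (intro mult_right_mono) auto
  qed
  also have "\<dots> \<le> BP N x K n" unfolding BP_def S_def[symmetric] L_def[symmetric]
    using l BQ_nonneg[of N x n] by (intro member_le_sum[where f = "\<lambda>l. \<bar>poly (Qp x n) (x l)\<bar> + (\<Sum>k\<in>S. (1 + K\<^sup>2 * BQ N x n) * \<bar>poly (L k) (x l) / poly (L k) (x k)\<bar>)"]) (auto intro!: add_nonneg_nonneg sum_nonneg)
  finally show ?thesis .
qed


lemma P_small:
  assumes n: "n < N" and K: "K > 0" and H: "HK N K w" and k: "k \<in> {1..n}"
  shows "w k * \<bar>poly (P n) (x k)\<bar> \<le> CS N x K n k * w (Suc n)"
proof -
  define L where "L = Lg x {1..n} k"
  have Lnz: "poly L (x k) \<noteq> 0" unfolding L_def using Lg_nz[of "{1..n}" k] k n by auto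
  have "degree L = n - 1" unfolding L_def using Lg_deg[of "{1..n}" k x] k by simp
  hence "degree L < n" using k by auto
  hence o: "ip N x w (P n) L = 0" using P_orth n by simp
  define f where "f l = w l * poly (P n) (x l) * poly L (x l)" for l
  have kN: "k \<in> {1..N}" using k n by auto
  have "0 = (\<Sum>l=1..N. f l)" using o unfolding ip_def f_def by simp
  also have "\<dots> = f k + (\<Sum>l\<in>{1..N} - {k}. f l)" using kN by (subst sum.remove) auto
  finally have fk: "f k = - (\<Sum>l\<in>{1..N} - {k}. f l)" by simp
  have fb: "\<bar>f l\<bar> \<le> K * w (Suc n) * BP N x K n * \<bar>poly L (x l)\<bar>" if l: "l \<in> {1..N} - {k}" for l
  proof (cases "l \<le> n")
    case True
    hence "poly L (x l) = 0" unfolding L_def using l by (intro Lg_root) auto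
    hence "f l = 0" unfolding f_def by simp
    moreover have "0 \<le> BP N x K n" using P_bound[OF n K H kN] by linarith
    ultimately show ?thesis using K pos[of "Suc n"] n by simp
  next
    case False
    hence wl: "w l \<le> K * w (Suc n)" using H l unfolding HK_def by auto
    have pl: "\<bar>poly (P n) (x l)\<bar> \<le> BP N x K n" using P_bound[OF n K H] l by auto
    have "\<bar>f l\<bar> = w l * \<bar>poly (P n) (x l)\<bar> * \<bar>poly L (x l)\<bar>"
      unfolding f_def using pos[of l] l by (simp add: abs_mult)
    also have "\<dots> \<le> (K * w (Suc n)) * BP N x K n * \<bar>poly L (x l)\<bar>"
      using wl pl pos[of l] l by (intro mult_right_mono mult_mono) auto
    finally show ?thesis .
  qed
  have "\<bar>f k\<bar> \<le> (\<Sum>l\<in>{1..N} - {k}. \<bar>f l\<bar>)" using fk by (simp add: sum_abs)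
  also have "\<dots> \<le> (\<Sum>l\<in>{1..N} - {k}. K * w (Suc n) * BP N x K n * \<bar>poly L (x l)\<bar>)"
    using fb by (intro sum_mono) auto
  also have "\<dots> \<le> (\<Sum>l\<in>{1..N}. K * w (Suc n) * BP N x K n * \<bar>poly L (x l)\<bar>)"
    using P_bound[OF n K H kN] K pos[of "Suc n"] n
    by (intro sum_mono2) (auto intro!: mult_nonneg_nonneg)
  also have "\<dots> = K * w (Suc n) * BP N x K n * (\<Sum>l=1..N. \<bar>poly L (x l)\<bar>)"
    by (simp add: sum_distrib_left)
  finally have "w k * \<bar>poly (P n) (x k)\<bar> * \<bar>poly L (x k)\<bar> \<le> K * w (Suc n) * BP N x K n * (\<Sum>l=1..N. \<bar>poly L (x l)\<bar>)"
    unfolding f_def using pos[of k] kN by (simp add: abs_mult)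
  hence "w k * \<bar>poly (P n) (x k)\<bar> \<le> K * w (Suc n) * BP N x K n * (\<Sum>l=1..N. \<bar>poly L (x l)\<bar>) / \<bar>poly L (x k)\<bar>"
    using Lnz by (simp add: pos_le_divide_eq)
  thus ?thesis unfolding CS_def L_def by (simp add: algebra_simps)
qed


lemma b_bound:
  assumes n: "n < N" and K: "K > 0" and H: "HK N K w" and e: "e1 \<ge> 0" "e2 \<ge> 0"
    and e1: "\<forall>l\<in>{Suc (Suc n)..N}. w l \<le> e1 * w (Suc n)"
    and e2: "\<forall>l\<in>{1..n}. w (Suc n) \<le> e2 * w l"
  shows "\<bar>jacobi_b N x w (Suc n) - x (Suc n)\<bar> \<le> CB N x K n * (e1 + e2)"
proof -
  define j where "j = Suc n"
  define D where "D = (\<Sum>l=1..N. \<bar>x l - x j\<bar>)"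
  define B where "B = BP N x K n"
  define Cs where "Cs = (\<Sum>k\<in>{1..n}. (CS N x K n k)\<^sup>2)"
  define T where "T l = w l * (x l - x j) * (poly (P n) (x l))\<^sup>2" for l
  have jN: "j \<in> {1..N}" using n j_def by auto
  have wj: "w j > 0" using pos jN by auto
  have np: "nrm n > 0" using nrm_pos n by simp
  have B0: "B \<ge> 0" using P_bound[OF n K H jN] B_def by linarith
  have Cs0: "Cs \<ge> 0" unfolding Cs_def by (intro sum_nonneg) auto
  have D0: "D \<ge> 0" unfolding D_def by (intro sum_nonneg) auto
  have Dl: "\<bar>x l - x j\<bar> \<le> D" if "l \<in> {1..N}" for l
    unfolding D_def using that by (intro member_le_sum[where f = "\<lambda>l. \<bar>x l - x j\<bar>"]) auto
  have Tb: "\<bar>T l\<bar> \<le> w j * (e1 + e2) * (D * (B\<^sup>2 + Cs))" if l: "l \<in> {1..N}" for l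
  proof -
    have wl: "w l > 0" using pos l by auto
    have M0: "0 \<le> w j * (e1 + e2) * (D * (B\<^sup>2 + Cs))" using wj e D0 B0 Cs0 by simp
    have aT: "\<bar>T l\<bar> = \<bar>x l - x j\<bar> * (w l * (poly (P n) (x l))\<^sup>2)"
      unfolding T_def using wl by (simp add: abs_mult)
    consider "l = j" | "j < l" | "l \<le> n" using j_def by linarith
    thus ?thesis
    proof cases
      case 1 thus ?thesis using M0 by (simp add: T_def)
    next
      case 2
      have "w l * (poly (P n) (x l))\<^sup>2 \<le> (e1 * w j) * B\<^sup>2"
        using e1 2 l j_def P_bound[OF n K H l] wl e wj unfolding B_def
        by (intro mult_mono) (auto simp: abs_le_square_iff[symmetric] power2_abs)
      also have "\<dots> \<le> w j * (e1 + e2) * (B\<^sup>2 + Cs)"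
        using e wj Cs0 by (simp add: algebra_simps add_nonneg_nonneg mult_nonneg_nonneg)
      finally have "\<bar>T l\<bar> \<le> D * (w j * (e1 + e2) * (B\<^sup>2 + Cs))"
        unfolding aT by (rule mult_mono[OF Dl[OF l]]) (use D0 wl in auto)
      thus ?thesis by (simp add: algebra_simps)
    next
      case 3
      hence lk: "l \<in> {1..n}" using l by auto
      have sm: "w l * \<bar>poly (P n) (x l)\<bar> \<le> CS N x K n l * w j"
        using P_small[OF n K H lk] j_def by simp
      have cs0: "0 \<le> CS N x K n l * w j" using sm wl by (meson abs_ge_zero mult_nonneg_nonneg less_imp_le order_trans)
      have "w l * (w l * (poly (P n) (x l))\<^sup>2) = (w l * \<bar>poly (P n) (x l)\<bar>)\<^sup>2"
        by (simp add: power2_eq_square abs_mult_self_eq algebra_simps)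
      also have "\<dots> \<le> (CS N x K n l * w j)\<^sup>2"
        using sm wl by (intro power_mono) auto
      also have "\<dots> = (CS N x K n l)\<^sup>2 * w j * w j" by (simp add: power2_eq_square)
      also have "\<dots> \<le> (CS N x K n l)\<^sup>2 * w j * (e2 * w l)"
        using e2 lk j_def wj by (intro mult_left_mono) auto
      finally have "w l * (w l * (poly (P n) (x l))\<^sup>2) \<le> w l * ((CS N x K n l)\<^sup>2 * w j * e2)"
        by (simp add: algebra_simps)
      hence a: "w l * (poly (P n) (x l))\<^sup>2 \<le> (CS N x K n l)\<^sup>2 * w j * e2" using wl by simp
      have "(CS N x K n l)\<^sup>2 \<le> Cs" unfolding Cs_def using lk
        by (intro member_le_sum[where f = "\<lambda>k. (CS N x K n k)\<^sup>2"]) auto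
      hence "(CS N x K n l)\<^sup>2 * w j * e2 \<le> w j * (e1 + e2) * (B\<^sup>2 + Cs)"
        using e wj B0 by (smt (verit) mult_left_mono mult_right_mono mult_nonneg_nonneg zero_le_power2 mult.commute mult.left_commute)
      with a have "w l * (poly (P n) (x l))\<^sup>2 \<le> w j * (e1 + e2) * (B\<^sup>2 + Cs)" by linarith
      hence "\<bar>T l\<bar> \<le> D * (w j * (e1 + e2) * (B\<^sup>2 + Cs))"
        unfolding aT by (rule mult_mono[OF Dl[OF l]]) (use D0 wl in auto)
      thus ?thesis by (simp add: algebra_simps)
    qed
  qed
  have num: "ip N x w ([:0,1:] * P n) (P n) - x j * nrm n = (\<Sum>l=1..N. T l)"
    unfolding ip_def T_def by (simp add: sum_distrib_left sum_subtractf[symmetric] algebra_simps power2_eq_square)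
  have "\<bar>\<Sum>l=1..N. T l\<bar> \<le> (\<Sum>l=1..N. w j * (e1 + e2) * (D * (B\<^sup>2 + Cs)))"
    by (rule order_trans[OF sum_abs]) (intro sum_mono Tb)
  also have "\<dots> = real N * (w j * (e1 + e2) * (D * (B\<^sup>2 + Cs)))" by simp
  finally have nb: "\<bar>\<Sum>l=1..N. T l\<bar> \<le> real N * (w j * (e1 + e2) * (D * (B\<^sup>2 + Cs)))" .
  have lower: "w j / K * gam x n \<le> nrm n" using nrm_lower[OF n K H] j_def by simp
  have gp: "gam x n > 0" using gam_pos n by simp
  have "jacobi_b N x w j - x j = (\<Sum>l=1..N. T l) / nrm n"
    using jb_val[OF n] np num j_def by (simp add: field_simps)
  hence "\<bar>jacobi_b N x w j - x j\<bar> = \<bar>\<Sum>l=1..N. T l\<bar> / nrm n" using np by simp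
  also have "\<dots> \<le> real N * (w j * (e1 + e2) * (D * (B\<^sup>2 + Cs))) / (w j / K * gam x n)"
    using nb lower np wj K gp by (intro frac_le) (auto intro!: mult_nonneg_nonneg simp: e D0 Cs0)
  also have "\<dots> = CB N x K n * (e1 + e2)"
    unfolding CB_def D_def[symmetric] B_def[symmetric] Cs_def[symmetric] j_def[symmetric]
    using wj K gp by (simp add: field_simps)
  finally show ?thesis unfolding j_def .
qed


lemma a_bound:
  assumes n: "1 \<le> n" "Suc n \<le> N" and K: "K > 0" and H: "HK N K w" and e: "e1 \<ge> 0"
    and e1: "\<forall>l\<in>{Suc n..N}. w l \<le> e1 * w n"
  shows "\<bar>jacobi_a N x w n\<bar> \<le> sqrt (K * BQ N x n / gam x (n - 1)) * sqrt e1"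
proof -
  have wn: "w n > 0" using pos n by auto
  have np: "nrm n > 0" "nrm (n - 1) > 0" using nrm_pos n by auto
  have gp: "gam x (n - 1) > 0" using gam_pos n by simp
  have up: "nrm n \<le> e1 * w n * BQ N x n"
    unfolding BQ_def using n e wn e1 by (intro nrm_upper) auto
  have lo: "w n / K * gam x (n - 1) \<le> nrm (n - 1)" using nrm_lower[of "n - 1" K] n K H by simp
  have "nrm n / nrm (n - 1) \<le> (e1 * w n * BQ N x n) / (w n / K * gam x (n - 1))"
    using up lo np wn K gp e BQ_nonneg[of N x n] by (intro frac_le) auto
  also have "\<dots> = K * BQ N x n / gam x (n - 1) * e1" using wn K gp by (simp add: field_simps)
  finally have "sqrt (nrm n / nrm (n - 1)) \<le> sqrt (K * BQ N x n / gam x (n - 1) * e1)"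
    by (rule real_sqrt_le_mono)
  hence "sqrt (nrm n / nrm (n - 1)) \<le> sqrt (K * BQ N x n / gam x (n - 1)) * sqrt e1"
    by (simp only: real_sqrt_mult)
  moreover have "sqrt (nrm n / nrm (n - 1)) \<ge> 0" using np by simp
  ultimately show ?thesis using ja_val[OF n] by simp
qed


end

lemma exp_mono_le: "t \<ge> 0 \<Longrightarrow> (u::real) \<le> v \<Longrightarrow> exp (2 * t * u) \<le> exp (2 * t * v)"
  by (simp add: mult_left_mono)

lemma tilt_ratio:
  fixes N :: nat and x r :: "nat \<Rightarrow> real"
  assumes rpos: "\<And>j. 1 \<le> j \<Longrightarrow> j \<le> N \<Longrightarrow> r j > 0"
    and rsum: "(\<Sum>j=1..N. r j) = 1"
    and rho: "\<rho> > 0" "\<forall>j\<in>{1..N}. \<rho> \<le> r j"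
    and ab: "a \<in> {1..N}" "b \<in> {1..N}"
  shows "tilt_w N x r t b \<le> (1 / \<rho>) * exp (2 * t * (x b - x a)) * tilt_w N x r t a"
proof -
  define Z where "Z = (\<Sum>k=1..N. r k * exp (2 * t * x k))"
  have Z: "Z > 0" unfolding Z_def using ab rpos
    by (intro sum_pos) auto
  have "r b \<le> (\<Sum>j=1..N. r j)" using ab rpos
    by (intro member_le_sum) (auto intro: less_imp_le)
  hence rb: "r b \<le> 1" using rsum by simp
  have ra: "1 \<le> r a / \<rho>" using rho ab by simp
  have Eb: "exp (2 * t * x b) = exp (2 * t * (x b - x a)) * exp (2 * t * x a)"
    by (simp add: exp_add[symmetric] algebra_simps)
  have "r b * exp (2 * t * x b) \<le> exp (2 * t * x b)" using rb by simp
  also have "\<dots> \<le> exp (2 * t * (x b - x a)) * (exp (2 * t * x a) * (r a / \<rho>))"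
    unfolding Eb using mult_left_mono[OF ra, of "exp (2 * t * x a)"] by (intro mult_left_mono) auto
  finally have "r b * exp (2 * t * x b) \<le> (1 / \<rho>) * exp (2 * t * (x b - x a)) * (r a * exp (2 * t * x a))"
    by (simp add: field_simps)
  hence "r b * exp (2 * t * x b) / Z \<le> (1 / \<rho>) * exp (2 * t * (x b - x a)) * (r a * exp (2 * t * x a)) / Z"
    using Z by (intro divide_right_mono) auto
  thus ?thesis unfolding tilt_w_def Z_def[symmetric] by simp
qed


theorem theorem2p6:
  fixes N :: nat and x r :: "nat \<Rightarrow> real"
  assumes "N \<ge> 2"
    and "\<And>i j. 1 \<le> i \<Longrightarrow> i < j \<Longrightarrow> j \<le> N \<Longrightarrow> x i > x j"
    and "\<And>j. 1 \<le> j \<Longrightarrow> j \<le> N \<Longrightarrow> r j > 0"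
    and "(\<Sum>j=1..N. r j) = 1"
  shows "\<exists>C3 C4. \<forall>t\<ge>0.
     (\<forall>j\<in>{1..N}. \<bar>jacobi_b N x (tilt_w N x r t) j - x j\<bar> \<le>
        C3 * ((if j < N then exp (2 * t * (x (j + 1) - x j)) else 0)
            + (if j > 1 then exp (2 * t * (x j - x (j - 1))) else 0)))
   \<and> (\<forall>j\<in>{1..N - 1}. \<bar>jacobi_a N x (tilt_w N x r t) j\<bar> \<le>
        C4 * ((if j + 2 \<le> N then exp (t * (x (j + 2) - x (j + 1))) else 0)
            + exp (t * (x (j + 1) - x j))
            + (if j > 1 then exp (t * (x j - x (j - 1))) else 0)))"
proof -
  note dec = assms(2) and rpos = assms(3) and rsum = assms(4)
  define \<rho> where "\<rho> = Min (r ` {1..N})"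
  have rho: "\<rho> > 0" "\<forall>j\<in>{1..N}. \<rho> \<le> r j"
    unfolding \<rho>_def using assms(1) rpos by (auto simp: Min_gr_iff)
  define K where "K = 1 / \<rho>"
  have K: "K > 0" using rho K_def by simp
  define C3 where "C3 = K * (\<Sum>j=1..N. \<bar>CB N x K (j - 1)\<bar>)"
  define C4 where "C4 = sqrt K * (\<Sum>j=1..N. \<bar>sqrt (K * BQ N x j / gam x (j - 1))\<bar>)"
  have xle: "x l \<le> x m" if "1 \<le> m" "m \<le> l" "l \<le> N" for l m
    using dec[of m l] that by (cases "m = l") auto
  have "\<forall>t\<ge>0.
     (\<forall>j\<in>{1..N}. \<bar>jacobi_b N x (tilt_w N x r t) j - x j\<bar> \<le>
        C3 * ((if j < N then exp (2 * t * (x (j + 1) - x j)) else 0)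
            + (if j > 1 then exp (2 * t * (x j - x (j - 1))) else 0)))
   \<and> (\<forall>j\<in>{1..N - 1}. \<bar>jacobi_a N x (tilt_w N x r t) j\<bar> \<le>
        C4 * ((if j + 2 \<le> N then exp (t * (x (j + 2) - x (j + 1))) else 0)
            + exp (t * (x (j + 1) - x j))
            + (if j > 1 then exp (t * (x j - x (j - 1))) else 0)))"
  proof (intro allI impI conjI ballI)
    fix t :: real assume t: "t \<ge> 0"
    define w where "w = tilt_w N x r t"
    have ratio: "w b \<le> K * exp (2 * t * (x b - x a)) * w a" if "a \<in> {1..N}" "b \<in> {1..N}" for a b
      unfolding w_def K_def using tilt_ratio[OF rpos rsum rho that] by simp
    have wpos: "w j > 0" if "1 \<le> j" "j \<le> N" for j
    proof -
      have "(\<Sum>k=1..N. r k * exp (2 * t * x k)) > 0" using rpos that by (intro sum_pos) auto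
      thus ?thesis unfolding w_def tilt_w_def using rpos[OF that] by simp
    qed
    interpret opw N x w using dec wpos by unfold_locales auto
    have H: "HK N K w" unfolding HK_def
    proof (intro allI impI)
      fix a b :: nat assume ab: "1 \<le> a" "a \<le> b" "b \<le> N"
      have "w b \<le> K * exp (2 * t * (x b - x a)) * w a" using ratio ab by auto
      also have "\<dots> \<le> K * 1 * w a"
        using xle[of a b] ab K wpos[of a] t by (intro mult_right_mono mult_left_mono) (auto simp: mult_nonpos_nonneg mult_nonneg_nonpos)
      finally show "w b \<le> K * w a" by simp
    qed
    {
      fix j assume j: "j \<in> {1..N}"
      define n where "n = j - 1"
      have jn: "j = Suc n" "n < N" using j n_def by auto
      define E1 where "E1 = (if j < N then exp (2 * t * (x (j + 1) - x j)) else 0)"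
      define E2 where "E2 = (if j > 1 then exp (2 * t * (x j - x (j - 1))) else 0)"
      have E0: "E1 \<ge> 0" "E2 \<ge> 0" unfolding E1_def E2_def by auto
      have h1: "\<forall>l\<in>{Suc (Suc n)..N}. w l \<le> (K * E1) * w (Suc n)"
      proof
        fix l assume l: "l \<in> {Suc (Suc n)..N}"
        hence jl: "j < N" using jn by auto
        have "w l \<le> K * exp (2 * t * (x l - x j)) * w j" using ratio l j jn by auto
        also have "\<dots> \<le> K * E1 * w j" unfolding E1_def using jl l jn K wpos[of j] t xle[of "j + 1" l]
          by (intro mult_right_mono mult_left_mono exp_mono_le) (auto intro!: mult_left_mono)
        finally show "w l \<le> (K * E1) * w (Suc n)" using jn by simp
      qed
      have h2: "\<forall>l\<in>{1..n}. w (Suc n) \<le> (K * E2) * w l"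
      proof
        fix l assume l: "l \<in> {1..n}"
        hence jl: "j > 1" using jn by auto
        have "w j \<le> K * exp (2 * t * (x j - x l)) * w l" using ratio l j jn by auto
        also have "\<dots> \<le> K * E2 * w l" unfolding E2_def using jl l jn K wpos[of l] t xle[of l "j - 1"]
          by (intro mult_right_mono mult_left_mono exp_mono_le) (auto intro!: mult_left_mono)
        finally show "w (Suc n) \<le> (K * E2) * w l" using jn by simp
      qed
      have "\<bar>jacobi_b N x w (Suc n) - x (Suc n)\<bar> \<le> CB N x K n * (K * E1 + K * E2)"
        by (rule b_bound[OF jn(2) K H _ _ h1 h2]) (use K E0 in auto)
      also have "\<dots> = CB N x K n * (K * (E1 + E2))" by (simp add: algebra_simps)
      also have "\<dots> \<le> \<bar>CB N x K n\<bar> * (K * (E1 + E2))"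
        using K E0 by (intro mult_right_mono) auto
      also have "\<dots> = \<bar>CB N x K n\<bar> * K * (E1 + E2)" by simp
      also have "\<dots> \<le> (\<Sum>j=1..N. \<bar>CB N x K (j - 1)\<bar>) * K * (E1 + E2)"
      proof -
        have "\<bar>CB N x K n\<bar> \<le> (\<Sum>j=1..N. \<bar>CB N x K (j - 1)\<bar>)"
          using member_le_sum[of j "{1..N}" "\<lambda>j. \<bar>CB N x K (j - 1)\<bar>"] j n_def by simp
        thus ?thesis using K E0 by (intro mult_right_mono) auto
      qed
      finally show "\<bar>jacobi_b N x (tilt_w N x r t) j - x j\<bar> \<le>
        C3 * ((if j < N then exp (2 * t * (x (j + 1) - x j)) else 0)
            + (if j > 1 then exp (2 * t * (x j - x (j - 1))) else 0))"
        unfolding C3_def E1_def[symmetric] E2_def[symmetric] w_def[symmetric] using jn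
        by (simp add: algebra_simps)
    }
    {
      fix j assume j: "j \<in> {1..N - 1}"
      have jr: "1 \<le> j" "Suc j \<le> N" using j assms(1) by auto
      define E where "E = exp (t * (x (j + 1) - x j))"
      have E0: "E \<ge> 0" unfolding E_def by simp
      have h1: "\<forall>l\<in>{Suc j..N}. w l \<le> (K * exp (2 * t * (x (j + 1) - x j))) * w j"
      proof
        fix l assume l: "l \<in> {Suc j..N}"
        have "w l \<le> K * exp (2 * t * (x l - x j)) * w j" using ratio l jr by auto
        also have "\<dots> \<le> K * exp (2 * t * (x (j + 1) - x j)) * w j" using l jr K wpos[of j] t xle[of "j + 1" l]
          by (intro mult_right_mono mult_left_mono exp_mono_le) (auto intro!: mult_left_mono)
        finally show "w l \<le> (K * exp (2 * t * (x (j + 1) - x j))) * w j" .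
      qed
      have sq: "sqrt (K * exp (2 * t * (x (j + 1) - x j))) = sqrt K * E"
      proof -
        have "exp (2 * t * (x (j + 1) - x j)) = E\<^sup>2"
          unfolding E_def by (simp add: power2_eq_square exp_add[symmetric] algebra_simps)
        thus ?thesis using E0 by (simp add: real_sqrt_mult)
      qed
      have "\<bar>jacobi_a N x w j\<bar> \<le> sqrt (K * BQ N x j / gam x (j - 1)) * sqrt (K * exp (2 * t * (x (j + 1) - x j)))"
        by (rule a_bound[OF jr K H _ h1]) (use K in auto)
      also have "\<dots> = sqrt (K * BQ N x j / gam x (j - 1)) * sqrt K * E" using sq by simp
      also have "\<dots> \<le> \<bar>sqrt (K * BQ N x j / gam x (j - 1))\<bar> * sqrt K * E"
        using E0 K by (intro mult_right_mono) auto
      also have "\<dots> \<le> (\<Sum>j=1..N. \<bar>sqrt (K * BQ N x j / gam x (j - 1))\<bar>) * sqrt K * E"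
        using E0 K jr
        by (intro mult_right_mono member_le_sum[where f = "\<lambda>j. \<bar>sqrt (K * BQ N x j / gam x (j - 1))\<bar>"]) auto
      also have "\<dots> = C4 * E" unfolding C4_def by simp
      also have "\<dots> \<le> C4 * ((if j + 2 \<le> N then exp (t * (x (j + 2) - x (j + 1))) else 0)
            + E + (if j > 1 then exp (t * (x j - x (j - 1))) else 0))"
        unfolding C4_def using K by (intro mult_left_mono) (auto intro!: sum_nonneg)
      finally show "\<bar>jacobi_a N x (tilt_w N x r t) j\<bar> \<le>
        C4 * ((if j + 2 \<le> N then exp (t * (x (j + 2) - x (j + 1))) else 0)
            + exp (t * (x (j + 1) - x j))
            + (if j > 1 then exp (t * (x j - x (j - 1))) else 0))"
        unfolding E_def w_def .
    }
  qed
  thus ?thesis by blast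
qed

end
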